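(* Let $L:\mathbb{R}^d\to\mathbb{R}^{\mathcal{Y}}_+$ be a polyhedral loss which indirectly elicits a finite property $\gamma:\Delta_{\mathcal{Y}}\rightrightarrows\mathcal{R}$. Then there exists $\epsilon_0>0$ such that for all $0<\epsilon\le\epsilon_0$, the general $\epsilon$-thickened link construction for $L,\gamma,\epsilon,\|\cdot\|_\infty$ produces a link that is separated (i.e., $\epsilon'$-separated for some $\epsilon'>0$) with respect to $\mathrm{prop}[L]$ and $\gamma$.
   Context: $\mathcal{Y}$ is a finite label set, $\Delta_{\mathcal{Y}}$ the simplex, $\mathbb{R}^{\mathcal{Y}}_+$ the nonnegative orthant. A property $\gamma:\Delta_{\mathcal{Y}}\rightrightarrows\mathcal{R}$ maps each $p$ to a nonempty subset of $\mathcal{R}$; finite if $\mathcal{R}$ finite; level sets $\gamma_r=\{p:r\in\gamma(p)\}$. $L:\mathbb{R}^d\to\mathbb{R}^{\mathcal{Y}}_+$ is polyhedral if each coordinate is a max of finitely many affine functions; it elicits $\Gamma=\mathrm{prop}[L]$, $\Gamma(p)=\arg\min_u\langle p,L(u)\rangle$. $L$ indirectly elicits $\gamma$ if for all $u$ there is $r$ with $\Gamma_u\subseteq\gamma_r$. General $\epsilon$-thickened link construction for $L,\gamma,\epsilon,\|\cdot\|$: let $\mathcal{U}=\{\Gamma(p):p\in\Delta_{\mathcal{Y}}\}$, $\Gamma_U=\{p:\Gamma(p)=U\}$, $R_U=\{r\in\mathcal{R}:\Gamma_U\subseteq\gamma_r\}$; initialize $\Psi(u)=\mathcal{R}$ for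 all $u$; for each $U\in\mathcal{U}$ and each $u$ with $\inf_{u^*\in U}\|u^*-u\|<\epsilon$ set $\Psi(u)\leftarrow\Psi(u)\cap R_U$; if $\Psi(u)\ne\emptyset$ for all $u$ the construction produces the links $\psi$ with $\psi(u)\in\Psi(u)$ for all $u$. A link $\psi:\mathbb{R}^d\to\mathcal{R}$ is $\epsilon'$-separated with respect to $\Gamma$ and $\gamma$ if $\psi(u)\notin\gamma(p)$ implies $\inf_{a\in\Gamma(p)}\|u-a\|_\infty\ge\epsilon'$. *)

theory Defs
  imports "HOL-Analysis.Analysis"
begin

definition prob_simplex :: "('y::finite \<Rightarrow> real) set" where
  "prob_simplex = {p. (\<forall>y. 0 \<le> p y) \<and> sum p UNIV = 1}"

definition dist_inf :: "real^'d::finite \<Rightarrow> real^'d \<Rightarrow> real" where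
  "dist_inf u v = Max (range (\<lambda>i. \<bar>u $ i - v $ i\<bar>))"

definition polyhedral_loss :: "(real^'d::finite \<Rightarrow> 'y \<Rightarrow> real) \<Rightarrow> bool" where
  "polyhedral_loss L \<longleftrightarrow> (\<forall>u y. 0 \<le> L u y) \<and>
     (\<forall>y. \<exists>A :: ((real^'d) \<times> real) set. finite A \<and> A \<noteq> {} \<and>
        (\<forall>u. L u y = Max ((\<lambda>(a,b). a \<bullet> u + b) ` A)))"

definition exp_loss :: "(real^'d::finite \<Rightarrow> 'y::finite \<Rightarrow> real) \<Rightarrow> ('y \<Rightarrow> real) \<Rightarrow> real^'d \<Rightarrow> real" where
  "exp_loss L p u = (\<Sum>y\<in>UNIV. p y * L u y)"

definition prop_L :: "(real^'d::finite \<Rightarrow> 'y::finite \<Rightarrow> real) \<Rightarrow> ('y \<Rightarrow> real) \<Rightarrow> (real^'d) set" where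
  "prop_L L p = {u. \<forall>v. exp_loss L p u \<le> exp_loss L p v}"

definition is_property :: "(('y::finite \<Rightarrow> real) \<Rightarrow> 'r set) \<Rightarrow> bool" where
  "is_property \<gamma> \<longleftrightarrow> (\<forall>p\<in>prob_simplex. \<gamma> p \<noteq> {})"

definition level_set :: "(('y::finite \<Rightarrow> real) \<Rightarrow> 'r set) \<Rightarrow> 'r \<Rightarrow> ('y \<Rightarrow> real) set" where
  "level_set \<gamma> r = {p\<in>prob_simplex. r \<in> \<gamma> p}"

definition prop_level :: "(real^'d::finite \<Rightarrow> 'y::finite \<Rightarrow> real) \<Rightarrow> real^'d \<Rightarrow> ('y \<Rightarrow> real) set" where
  "prop_level L u = {p\<in>prob_simplex. u \<in> prop_L L p}"

definition indirectly_elicits ::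
  "(real^'d::finite \<Rightarrow> 'y::finite \<Rightarrow> real) \<Rightarrow> (('y \<Rightarrow> real) \<Rightarrow> 'r set) \<Rightarrow> bool" where
  "indirectly_elicits L \<gamma> \<longleftrightarrow> (\<forall>u. \<exists>r. prop_level L u \<subseteq> level_set \<gamma> r)"

definition link_U :: "(real^'d::finite \<Rightarrow> 'y::finite \<Rightarrow> real) \<Rightarrow> (real^'d) set set" where
  "link_U L = {prop_L L p | p. p \<in> prob_simplex}"

definition link_GammaU :: "(real^'d::finite \<Rightarrow> 'y::finite \<Rightarrow> real) \<Rightarrow> (real^'d) set \<Rightarrow> ('y \<Rightarrow> real) set" where
  "link_GammaU L U = {p\<in>prob_simplex. prop_L L p = U}"

definition link_RU ::
  "(real^'d::finite \<Rightarrow> 'y::finite \<Rightarrow> real) \<Rightarrow> (('y \<Rightarrow> real) \<Rightarrow> 'r set) \<Rightarrow> (real^'d) set \<Rightarrow> 'r set" where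
  "link_RU L \<gamma> U = {r. link_GammaU L U \<subseteq> level_set \<gamma> r}"

definition link_Psi ::
  "(real^'d::finite \<Rightarrow> 'y::finite \<Rightarrow> real) \<Rightarrow> (('y \<Rightarrow> real) \<Rightarrow> 'r set) \<Rightarrow> real \<Rightarrow> real^'d \<Rightarrow> 'r set" where
  "link_Psi L \<gamma> \<epsilon> u = UNIV \<inter> (\<Inter>U\<in>{U\<in>link_U L. (INF ustar\<in>U. ereal (dist_inf ustar u)) < ereal \<epsilon>}. link_RU L \<gamma> U)"

definition produced_link ::
  "(real^'d::finite \<Rightarrow> 'y::finite \<Rightarrow> real) \<Rightarrow> (('y \<Rightarrow> real) \<Rightarrow> 'r set) \<Rightarrow> real \<Rightarrow> (real^'d \<Rightarrow> 'r) \<Rightarrow> bool" where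
  "produced_link L \<gamma> \<epsilon> \<psi> \<longleftrightarrow> (\<forall>u. link_Psi L \<gamma> \<epsilon> u \<noteq> {}) \<and> (\<forall>u. \<psi> u \<in> link_Psi L \<gamma> \<epsilon> u)"

definition eps_separated ::
  "(real^'d::finite \<Rightarrow> 'y::finite \<Rightarrow> real) \<Rightarrow> (('y \<Rightarrow> real) \<Rightarrow> 'r set) \<Rightarrow> (real^'d \<Rightarrow> 'r) \<Rightarrow> real \<Rightarrow> bool" where
  "eps_separated L \<gamma> \<psi> \<epsilon>' \<longleftrightarrow>
     (\<forall>u. \<forall>p\<in>prob_simplex. \<psi> u \<notin> \<gamma> p \<longrightarrow> (INF a\<in>prop_L L p. ereal (dist_inf u a)) \<ge> ereal \<epsilon>')"

end

theory Submission
  imports Defs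
begin

lemma uniform_infeasible:
  fixes S :: "('a::euclidean_space \<times> real) set"
  assumes fin: "finite S" and inf: "\<forall>u. \<exists>x\<in>S. fst x \<bullet> u + snd x > 0"
  shows "\<exists>\<eta>>0. \<forall>u. \<exists>x\<in>S. fst x \<bullet> u + snd x \<ge> \<eta>"
proof -
  define S' where "S' = insert (0, -1) S"
  define C where "C = convex_cone hull S'"
  define z :: "'a \<times> real" where "z = (0, 1)"
  have finS': "finite S'" using fin by (simp add: S'_def)
  show ?thesis
  proof (cases "z \<in> C")
    case True
    have "z \<noteq> 0" by (simp add: z_def zero_prod_def)
    with True obtain t y where t: "0 \<le> t" and y: "y \<in> convex hull S'" and zty: "z = t *\<^sub>R y"
      unfolding C_def convex_cone_hull_separate conic_hull_explicit by auto
    from y obtain w where w0: "\<forall>x\<in>S'. 0 \<le> w x" and w1: "sum w S' = 1"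
      and wy: "(\<Sum>x\<in>S'. w x *\<^sub>R x) = y"
      unfolding convex_hull_finite[OF finS'] by auto
    have fsty: "fst y = (\<Sum>x\<in>S'. w x *\<^sub>R fst x)" using wy by (auto simp: fst_sum)
    have sndy: "snd y = (\<Sum>x\<in>S'. w x * snd x)" using wy by (auto simp: snd_sum)
    have tf: "t *\<^sub>R fst y = 0" using zty by (simp add: z_def prod_eq_iff)
    have ts: "t * snd y = 1" using zty by (simp add: z_def prod_eq_iff)
    then have tpos: "t > 0" using t by (cases "t = 0") auto
    have fy0: "fst y = 0" using tf tpos by simp
    show ?thesis
    proof (intro exI[of _ "1/t"] conjI allI)
      show "1/t > 0" using tpos by simp
      fix u
      define h where "h x = fst x \<bullet> u + snd x" for x :: "'a \<times> real"
      have "(\<Sum>x\<in>S'. w x * h x) = fst y \<bullet> u + snd y"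
        by (simp add: h_def fsty sndy distrib_left sum.distrib inner_sum_left)
      also have "\<dots> = 1/t" using fy0 ts tpos by (simp add: field_simps)
      finally have sumh: "(\<Sum>x\<in>S'. w x * h x) = 1/t" .
      define M where "M = Max (h ` S')"
      have hM: "h x \<le> M" if "x \<in> S'" for x using finS' that by (simp add: M_def)
      have "(\<Sum>x\<in>S'. w x * h x) \<le> (\<Sum>x\<in>S'. w x * M)"
        by (rule sum_mono) (use w0 hM in \<open>simp add: mult_left_mono\<close>)
      also have "\<dots> = M" using w1 by (simp add: sum_distrib_right[symmetric])
      finally have tM: "1/t \<le> M" using sumh by simp
      have "M \<in> h ` S'" unfolding M_def by (rule Max_in) (use finS' in \<open>auto simp: S'_def\<close>)
      then obtain x0 where x0: "x0 \<in> S'" "h x0 = M" by auto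
      show "\<exists>x\<in>S. 1/t \<le> fst x \<bullet> u + snd x"
      proof (cases "x0 \<in> S")
        case True then show ?thesis using x0 tM by (auto simp: h_def)
      next
        case False
        then have "x0 = (0,-1)" using x0 by (simp add: S'_def)
        then have "M = -1" using x0 by (simp add: h_def)
        then show ?thesis using tM tpos
          by (smt (verit) divide_pos_pos)
      qed
    qed
  next
    case False
    have "closed C" unfolding C_def
      by (rule polyhedron_imp_closed, rule polyhedron_convex_cone_hull, rule finS')
    moreover have "convex C" unfolding C_def by (rule convex_convex_cone_hull)
    ultimately obtain a b where ab: "a \<bullet> z < b" "\<forall>x\<in>C. a \<bullet> x > b"
      using separating_hyperplane_closed_point False by blast
    have "0 \<in> C" unfolding C_def by (rule convex_cone_hull_contains_0)
    then have b0: "b < 0" using ab by auto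
    have nonneg: "a \<bullet> x \<ge> 0" if "x \<in> C" for x
    proof (rule ccontr)
      assume neg: "\<not> a \<bullet> x \<ge> 0"
      define s where "s = b / (a \<bullet> x)"
      have "s \<ge> 0" using neg b0 by (simp add: s_def divide_nonpos_neg)
      then have "s *\<^sub>R x \<in> C" using that unfolding C_def by (rule convex_cone_hull_mul[rotated])
      then have "a \<bullet> (s *\<^sub>R x) > b" using ab by auto
      moreover have "a \<bullet> (s *\<^sub>R x) = b" using neg by (simp add: s_def)
      ultimately show False by simp
    qed
    obtain w s where a: "a = (w, s)" by (cases a)
    have s0: "s < 0" using ab(1) b0 by (simp add: a z_def)
    define u where "u = (1/s) *\<^sub>R w"
    have "fst x \<bullet> u + snd x \<le> 0" if "x \<in> S" for x
    proof -
      have "x \<in> C" using that unfolding C_def S'_def by (simp add: hull_inc)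
      then have ws: "w \<bullet> fst x + s * snd x \<ge> 0" using nonneg[of x] by (cases x) (simp add: a)
      have "(w \<bullet> fst x) / s \<le> - snd x"
        by (subst neg_divide_le_eq[OF s0]) (use ws in \<open>simp add: algebra_simps\<close>)
      then show ?thesis by (simp add: u_def inner_commute)
    qed
    with inf show ?thesis by (meson not_less)
  qed
qed


lemma dist_inf_ge: "\<bar>u $ i - v $ i\<bar> \<le> dist_inf v u"
  unfolding dist_inf_def by (rule Max_ge) (auto simp: abs_minus_commute)

lemma dist_inf_nonneg: "0 \<le> dist_inf v u"
  using dist_inf_ge[of u undefined v] by linarith

context
  fixes L :: "real^'d::finite \<Rightarrow> 'y::finite \<Rightarrow> real" and A :: "'y \<Rightarrow> ((real^'d) \<times> real) set"
  assumes Afin: "\<And>y. finite (A y)" and Ane: "\<And>y. A y \<noteq> {}"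
    and LA: "\<And>u y. L u y = Max ((\<lambda>(a,b). a \<bullet> u + b) ` A y)"
begin

lemma piece_le: "x \<in> A y \<Longrightarrow> fst x \<bullet> u + snd x \<le> L u y"
  unfolding LA by (rule Max_ge) (auto simp: Afin intro!: rev_image_eqI[of x] split: prod.splits)

lemma piece_active: "\<exists>x\<in>A y. fst x \<bullet> u + snd x = L u y"
proof -
  have "L u y \<in> (\<lambda>(a,b). a \<bullet> u + b) ` A y" unfolding LA
    by (rule Max_in) (auto simp: Afin Ane)
  then obtain x where "x \<in> A y" "L u y = (\<lambda>(a,b). a \<bullet> u + b) x" by blast
  then show ?thesis by (intro bexI[of _ x]) (auto split: prod.splits)
qed

lemma L_lip: "L u y \<le> L v y + (\<Sum>y\<in>UNIV. \<Sum>x\<in>A y. \<Sum>i\<in>UNIV. \<bar>fst x $ i\<bar>) * dist_inf v u"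
proof -
  define K where "K = (\<Sum>y\<in>UNIV. \<Sum>x\<in>A y. \<Sum>i\<in>UNIV. \<bar>fst x $ i\<bar>)"
  obtain x where x: "x \<in> A y" "fst x \<bullet> u + snd x = L u y" using piece_active by blast
  have v: "fst x \<bullet> v + snd x \<le> L v y" using piece_le[OF x(1)] .
  have "fst x \<bullet> (u - v) = (\<Sum>i\<in>UNIV. fst x $ i * (u - v) $ i)" by (simp add: inner_vec_def)
  also have "\<dots> \<le> (\<Sum>i\<in>UNIV. \<bar>fst x $ i\<bar> * dist_inf v u)"
  proof (rule sum_mono)
    fix i
    have "fst x $ i * (u - v) $ i \<le> \<bar>fst x $ i\<bar> * \<bar>u $ i - v $ i\<bar>"
      by (simp add: abs_mult[symmetric])
    also have "\<dots> \<le> \<bar>fst x $ i\<bar> * dist_inf v u"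
      by (rule mult_left_mono) (auto simp: dist_inf_ge)
    finally show "fst x $ i * (u - v) $ i \<le> \<bar>fst x $ i\<bar> * dist_inf v u" .
  qed
  also have "\<dots> = (\<Sum>i\<in>UNIV. \<bar>fst x $ i\<bar>) * dist_inf v u" by (simp add: sum_distrib_right)
  also have "\<dots> \<le> K * dist_inf v u"
  proof (rule mult_right_mono[OF _ dist_inf_nonneg])
    have "(\<Sum>i\<in>UNIV. \<bar>fst x $ i\<bar>) \<le> (\<Sum>x\<in>A y. \<Sum>i\<in>UNIV. \<bar>fst x $ i\<bar>)"
      by (rule member_le_sum[OF x(1)]) (auto simp: Afin intro: sum_nonneg)
    also have "\<dots> \<le> K" unfolding K_def
      by (rule member_le_sum) (auto intro!: sum_nonneg)
    finally show "(\<Sum>i\<in>UNIV. \<bar>fst x $ i\<bar>) \<le> K" .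
  qed
  finally have "fst x \<bullet> (u - v) \<le> K * dist_inf v u" .
  then show ?thesis using x v unfolding K_def[symmetric] by (simp add: inner_diff_right)
qed

lemma K_nonneg: "0 \<le> (\<Sum>y\<in>UNIV. \<Sum>x\<in>A y. \<Sum>i\<in>UNIV. \<bar>fst x $ i\<bar>)"
  by (auto intro!: sum_nonneg)

lemma f_lip:
  assumes "p \<in> prob_simplex"
  shows "exp_loss L p u \<le> exp_loss L p v + (\<Sum>y\<in>UNIV. \<Sum>x\<in>A y. \<Sum>i\<in>UNIV. \<bar>fst x $ i\<bar>) * dist_inf v u"
proof -
  define K where "K = (\<Sum>y\<in>UNIV. \<Sum>x\<in>A y. \<Sum>i\<in>UNIV. \<bar>fst x $ i\<bar>)"
  have p0: "\<And>y. 0 \<le> p y" and p1: "sum p UNIV = 1" using assms by (auto simp: prob_simplex_def)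
  have "exp_loss L p u \<le> (\<Sum>y\<in>UNIV. p y * (L v y + K * dist_inf v u))"
    unfolding exp_loss_def by (rule sum_mono) (use L_lip p0 in \<open>simp add: K_def mult_left_mono\<close>)
  also have "\<dots> = exp_loss L p v + sum p UNIV * (K * dist_inf v u)"
    by (simp add: exp_loss_def distrib_left sum.distrib sum_distrib_right)
  finally show ?thesis using p1 by (simp add: K_def)
qed

lemma pattern:
  assumes p0: "\<And>y. 0 \<le> p y" and u: "u \<in> prop_L L p"
    and sub: "{(y,x). x \<in> A y \<and> fst x \<bullet> u + snd x = L u y} \<subseteq> {(y,x). x \<in> A y \<and> fst x \<bullet> v + snd x = L v y}"
  shows "v \<in> prop_L L p"
proof -
  have "exp_loss L p v \<le> exp_loss L p u"
  proof (rule ccontr)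
    assume "\<not> exp_loss L p v \<le> exp_loss L p u"
    then have gt: "exp_loss L p u < exp_loss L p v" by simp
    define P where "P = (SIGMA y:UNIV. A y) - {(y,x). x \<in> A y \<and> fst x \<bullet> u + snd x = L u y}"
    have finP: "finite P" unfolding P_def by (rule finite_Diff, rule finite_SigmaI) (auto intro: Afin)
    have "\<forall>\<^sub>F s in at_right (0::real). \<forall>z\<in>P. s * (L v (fst z) - (fst (snd z) \<bullet> v + snd (snd z)))
            \<le> L u (fst z) - (fst (snd z) \<bullet> u + snd (snd z))"
    proof (rule eventually_ball_finite[OF finP], rule ballI)
      fix z assume z: "z \<in> P"
      obtain y x where zyx: "z = (y, x)" by (cases z)
      have xA: "x \<in> A y" using z by (auto simp: P_def zyx)
      define g where "g = L u y - (fst x \<bullet> u + snd x)"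
      define h where "h = L v y - (fst x \<bullet> v + snd x)"
      have "g \<ge> 0" using piece_le[OF xA, of u] by (simp add: g_def)
      moreover have "g \<noteq> 0" using z xA by (auto simp: P_def zyx g_def)
      ultimately have g0: "g > 0" by simp
      have h0: "h \<ge> 0" using piece_le[OF xA, of v] by (simp add: h_def)
      show "\<forall>\<^sub>F s in at_right 0. s * (L v (fst z) - (fst (snd z) \<bullet> v + snd (snd z)))
            \<le> L u (fst z) - (fst (snd z) \<bullet> u + snd (snd z))"
        unfolding eventually_at_right_field
      proof (intro exI[of _ "g / (h + 1)"] conjI allI impI)
        show "0 < g / (h + 1)" using g0 h0 by simp
        fix s :: real assume s: "0 < s" "s < g / (h + 1)"
        then have "s * (h + 1) < g" using h0 by (simp add: pos_less_divide_eq)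
        then have "s * h \<le> g" using s by (simp add: algebra_simps)
        then show "s * (L v (fst z) - (fst (snd z) \<bullet> v + snd (snd z)))
            \<le> L u (fst z) - (fst (snd z) \<bullet> u + snd (snd z))" by (simp add: zyx g_def h_def)
      qed
    qed
    then obtain b where b: "b > 0" and bP: "\<And>s. 0 < s \<Longrightarrow> s < b \<Longrightarrow> \<forall>z\<in>P. s * (L v (fst z) - (fst (snd z) \<bullet> v + snd (snd z)))
            \<le> L u (fst z) - (fst (snd z) \<bullet> u + snd (snd z))"
      unfolding eventually_at_right_field by blast
    define s where "s = b / 2"
    have s0: "0 < s" and sb: "s < b" using b by (auto simp: s_def)
    define w where "w = (1 + s) *\<^sub>R u - s *\<^sub>R v"
    have piece_w: "fst x \<bullet> w + snd x = (1 + s) * (fst x \<bullet> u + snd x) - s * (fst x \<bullet> v + snd x)" for x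
      by (simp add: w_def inner_diff_right algebra_simps)
    have Lw: "L w y = (1 + s) * L u y - s * L v y" for y
    proof -
      obtain x0 where x0: "x0 \<in> A y" "fst x0 \<bullet> u + snd x0 = L u y" using piece_active by blast
      then have x0v: "fst x0 \<bullet> v + snd x0 = L v y" using sub by auto
      show ?thesis unfolding LA[of w y]
      proof (rule Max_eqI)
        show "finite ((\<lambda>(a, b). a \<bullet> w + b) ` A y)" using Afin by simp
        show "(1 + s) * L u y - s * L v y \<in> (\<lambda>(a, b). a \<bullet> w + b) ` A y"
          using x0 x0v piece_w[of x0] by (auto intro!: rev_image_eqI[of x0] split: prod.splits)
      next
        fix t assume "t \<in> (\<lambda>(a, b). a \<bullet> w + b) ` A y"
        then obtain x where xA: "x \<in> A y" and t: "t = fst x \<bullet> w + snd x" by (auto split: prod.splits)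
        show "t \<le> (1 + s) * L u y - s * L v y"
        proof (cases "fst x \<bullet> u + snd x = L u y")
          case True
          then have "fst x \<bullet> v + snd x = L v y" using sub xA by auto
          then show ?thesis using True t piece_w[of x] by simp
        next
          case False
          then have "(y, x) \<in> P" using xA by (auto simp: P_def)
          then have h1: "s * (L v y - (fst x \<bullet> v + snd x)) \<le> L u y - (fst x \<bullet> u + snd x)"
            using bP[OF s0 sb] by auto
          have h0: "L u y - (fst x \<bullet> u + snd x) \<ge> 0" using piece_le[OF xA, of u] by simp
          then have h2: "0 \<le> s * (L u y - (fst x \<bullet> u + snd x))" using s0 by simp
          have "t = (1+s) * L u y - s * L v y - ((L u y - (fst x \<bullet> u + snd x)) + s * (L u y - (fst x \<bullet> u + snd x))
             - s * (L v y - (fst x \<bullet> v + snd x)))"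
            unfolding t piece_w[of x] by (simp add: algebra_simps)
          then show ?thesis using h0 h1 h2 by linarith
        qed
      qed
    qed
    have "exp_loss L p w = (\<Sum>y\<in>UNIV. (1+s) * (p y * L u y) - s * (p y * L v y))"
      by (simp add: exp_loss_def Lw algebra_simps)
    also have "\<dots> = (1 + s) * exp_loss L p u - s * exp_loss L p v"
      by (simp add: exp_loss_def sum_subtractf sum_distrib_left)
    also have "\<dots> < exp_loss L p u" using gt s0 by (simp add: algebra_simps)
    finally have "exp_loss L p w < exp_loss L p u" .
    moreover have "exp_loss L p u \<le> exp_loss L p w" using u by (simp add: prop_L_def)
    ultimately show False by simp
  qed
  then show ?thesis using u by (auto simp: prop_L_def intro: order_trans)
qed


lemma finite_U: "finite (link_U L)"
proof -
  define pat where "pat u = {(y,x). x \<in> A y \<and> fst x \<bullet> u + snd x = L u y}" for u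
  define Pc where "Pc = (SIGMA y:UNIV. A y)"
  have finPc: "finite Pc" unfolding Pc_def by (rule finite_SigmaI) (auto intro: Afin)
  have patPc: "pat u \<in> Pow Pc" for u by (auto simp: pat_def Pc_def)
  have "link_U L \<subseteq> (\<lambda>T. {v. pat v \<in> T}) ` Pow (Pow Pc)"
  proof
    fix U assume "U \<in> link_U L"
    then obtain p where p: "p \<in> prob_simplex" "U = prop_L L p" by (auto simp: link_U_def)
    have p0: "\<And>y. 0 \<le> p y" using p(1) by (auto simp: prob_simplex_def)
    have "U = {v. pat v \<in> pat ` U}"
    proof
      show "U \<subseteq> {v. pat v \<in> pat ` U}" by auto
      show "{v. pat v \<in> pat ` U} \<subseteq> U"
      proof
        fix v assume "v \<in> {v. pat v \<in> pat ` U}"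
        then obtain u where u: "u \<in> U" "pat v = pat u" by auto
        show "v \<in> U" unfolding p(2)
          by (rule pattern[OF p0]) (use u p(2) in \<open>auto simp: pat_def\<close>)
      qed
    qed
    moreover have "pat ` U \<in> Pow (Pow Pc)" using patPc by auto
    ultimately show "U \<in> (\<lambda>T. {v. pat v \<in> T}) ` Pow (Pow Pc)" by blast
  qed
  then show ?thesis by (rule finite_subset) (use finPc in simp)
qed

lemma bad_delta:
  assumes IU: "I \<subseteq> link_U L" and finI: "finite I" and emp: "\<Inter>I = {}" and ne: "\<forall>U\<in>I. U \<noteq> {}"
  shows "\<exists>\<delta>>0. \<forall>u. \<exists>U\<in>I. \<forall>u'\<in>U. \<delta> \<le> dist_inf u' u"
proof -
  define K where "K = (\<Sum>y\<in>UNIV. \<Sum>x\<in>A y. \<Sum>i\<in>UNIV. \<bar>fst x $ i\<bar>)"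
  have K0: "0 \<le> K" unfolding K_def by (rule K_nonneg)
  have "\<forall>U\<in>I. \<exists>p. p \<in> prob_simplex \<and> prop_L L p = U" using IU by (auto simp: link_U_def)
  then obtain pU where pU: "\<And>U. U \<in> I \<Longrightarrow> pU U \<in> prob_simplex \<and> prop_L L (pU U) = U" by metis
  have "\<forall>U\<in>I. \<exists>x. x \<in> U" using ne by blast
  then obtain xU where xU: "\<And>U. U \<in> I \<Longrightarrow> xU U \<in> U" by metis
  define m where "m U = exp_loss L (pU U) (xU U)" for U
  have m_min: "m U \<le> exp_loss L (pU U) w" if "U \<in> I" for U w
    using xU[OF that] pU[OF that] by (auto simp: m_def prop_L_def)
  have m_eq: "exp_loss L (pU U) u' = m U" if "U \<in> I" "u' \<in> U" for U u'
  proof -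
    have "u' \<in> prop_L L (pU U)" using pU[OF that(1)] that(2) by simp
    then have "exp_loss L (pU U) u' \<le> m U" by (simp add: prop_L_def m_def)
    then show ?thesis using m_min[OF that(1), of u'] by simp
  qed
  define Sig where "Sig = {\<sigma> :: 'y \<Rightarrow> ((real^'d) \<times> real). \<forall>y. \<sigma> y \<in> A y}"
  have "Sig = PiE UNIV A" by (auto simp: Sig_def PiE_def Pi_def extensional_def)
  then have finSig: "finite Sig" by (simp add: finite_PiE Afin)
  define g :: "(real^'d) set \<times> ('y \<Rightarrow> (real^'d) \<times> real) \<Rightarrow> (real^'d) \<times> real" where "g = (\<lambda>(U, \<sigma>). ((\<Sum>y\<in>UNIV. pU U y *\<^sub>R fst (\<sigma> y)),
      (\<Sum>y\<in>UNIV. pU U y * snd (\<sigma> y)) - m U))"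
  define Sys where "Sys = g ` (I \<times> Sig)"
  have finSys: "finite Sys" unfolding Sys_def using finI finSig by simp
  have gval: "fst (g (U, \<sigma>)) \<bullet> u + snd (g (U, \<sigma>)) =
      (\<Sum>y\<in>UNIV. pU U y * (fst (\<sigma> y) \<bullet> u + snd (\<sigma> y))) - m U" for U \<sigma> u
    by (simp add: g_def inner_sum_left distrib_left sum.distrib)
  have gle: "fst (g (U, \<sigma>)) \<bullet> u + snd (g (U, \<sigma>)) \<le> exp_loss L (pU U) u - m U"
    if "U \<in> I" "\<sigma> \<in> Sig" for U \<sigma> u
  proof -
    have p0: "\<And>y. 0 \<le> pU U y" using pU[OF that(1)] by (auto simp: prob_simplex_def)
    have "(\<Sum>y\<in>UNIV. pU U y * (fst (\<sigma> y) \<bullet> u + snd (\<sigma> y))) \<le> exp_loss L (pU U) u"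
      unfolding exp_loss_def
      by (rule sum_mono, rule mult_left_mono) (use that(2) p0 in \<open>auto simp: Sig_def intro: piece_le\<close>)
    then show ?thesis by (simp add: gval)
  qed
  have infeas: "\<forall>u. \<exists>x\<in>Sys. fst x \<bullet> u + snd x > 0"
  proof
    fix u
    obtain U where U: "U \<in> I" "u \<notin> U" using emp by blast
    define \<sigma> where "\<sigma> y = (SOME x. x \<in> A y \<and> fst x \<bullet> u + snd x = L u y)" for y
    have \<sigma>: "\<sigma> y \<in> A y \<and> fst (\<sigma> y) \<bullet> u + snd (\<sigma> y) = L u y" for y
      unfolding \<sigma>_def by (rule someI_ex) (use piece_active in blast)
    then have \<sigma>S: "\<sigma> \<in> Sig" by (simp add: Sig_def)
    have val: "fst (g (U, \<sigma>)) \<bullet> u + snd (g (U, \<sigma>)) = exp_loss L (pU U) u - m U"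
      by (simp add: gval \<sigma> exp_loss_def)
    have "exp_loss L (pU U) u - m U > 0"
    proof (rule ccontr)
      assume h: "\<not> exp_loss L (pU U) u - m U > 0"
      from h have "\<forall>w. exp_loss L (pU U) u \<le> exp_loss L (pU U) w" proof (intro allI)
        fix w assume h: "\<not> exp_loss L (pU U) u - m U > 0"
        show "exp_loss L (pU U) u \<le> exp_loss L (pU U) w" using h m_min[OF U(1), of w] by linarith
      qed
      then have "u \<in> prop_L L (pU U)" by (simp add: prop_L_def)
      then show False using pU[OF U(1)] U(2) by simp
    qed
    moreover have "g (U, \<sigma>) \<in> Sys" using U(1) \<sigma>S by (simp add: Sys_def)
    ultimately show "\<exists>x\<in>Sys. fst x \<bullet> u + snd x > 0" using val by force
  qed
  obtain \<eta> where \<eta>: "\<eta> > 0" "\<forall>u. \<exists>x\<in>Sys. fst x \<bullet> u + snd x \<ge> \<eta>"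
    using uniform_infeasible[OF finSys infeas] by blast
  show ?thesis
  proof (intro exI[of _ "\<eta> / (K + 1)"] conjI allI)
    show "\<eta> / (K + 1) > 0" using \<eta>(1) K0 by simp
    fix u
    obtain x where x: "x \<in> Sys" "fst x \<bullet> u + snd x \<ge> \<eta>" using \<eta>(2) by blast
    then obtain U \<sigma> where U: "U \<in> I" "\<sigma> \<in> Sig" "x = g (U, \<sigma>)" by (auto simp: Sys_def)
    show "\<exists>U\<in>I. \<forall>u'\<in>U. \<eta> / (K + 1) \<le> dist_inf u' u"
    proof (intro bexI[OF _ U(1)] ballI)
      fix u' assume u': "u' \<in> U"
      show "\<eta> / (K + 1) \<le> dist_inf u' u"
      proof (rule ccontr)
        assume "\<not> \<eta> / (K + 1) \<le> dist_inf u' u"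
        then have d: "dist_inf u' u < \<eta> / (K + 1)" by simp
        have "\<eta> \<le> exp_loss L (pU U) u - m U" using x(2) gle[OF U(1) U(2), of u] U(3) by simp
        also have "\<dots> \<le> exp_loss L (pU U) u' + K * dist_inf u' u - m U"
          using f_lip[of "pU U" u u'] pU[OF U(1)] by (simp add: K_def)
        also have "\<dots> = K * dist_inf u' u" using m_eq[OF U(1) u'] by simp
        also have "\<dots> \<le> K * (\<eta> / (K + 1))" using d K0 by (intro mult_left_mono) auto
        also have "\<dots> < \<eta>" using K0 \<eta>(1) by (simp add: field_simps)
        finally show False by simp
      qed
    qed
  qed
qed

end


theorem proposition7:
  fixes L :: "real^'d::finite \<Rightarrow> 'y::finite \<Rightarrow> real"
    and \<gamma> :: "('y \<Rightarrow> real) \<Rightarrow> 'r::finite set"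
  assumes "polyhedral_loss L"
    and "is_property \<gamma>"
    and "indirectly_elicits L \<gamma>"
  shows "\<exists>\<epsilon>0>0. \<forall>\<epsilon>. 0 < \<epsilon> \<and> \<epsilon> \<le> \<epsilon>0 \<longrightarrow>
           (\<forall>u. link_Psi L \<gamma> \<epsilon> u \<noteq> {}) \<and>
           (\<forall>\<psi>. produced_link L \<gamma> \<epsilon> \<psi> \<longrightarrow> (\<exists>\<epsilon>'>0. eps_separated L \<gamma> \<psi> \<epsilon>'))"
proof -
  have "\<forall>y. \<exists>B :: ((real^'d) \<times> real) set. finite B \<and> B \<noteq> {} \<and> (\<forall>u. L u y = Max ((\<lambda>(a,b). a \<bullet> u + b) ` B))"
    using assms(1) by (simp add: polyhedral_loss_def)
  then obtain A :: "'y \<Rightarrow> ((real^'d) \<times> real) set" where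
    A: "\<forall>y. finite (A y) \<and> A y \<noteq> {} \<and> (\<forall>u. L u y = Max ((\<lambda>(a,b). a \<bullet> u + b) ` A y))"
    by metis
  have A1: "\<And>y. finite (A y)" and A2: "\<And>y. A y \<noteq> {}"
    and A3: "\<And>u y. L u y = Max ((\<lambda>(a,b). a \<bullet> u + b) ` A y)" using A by auto
  have finU: "finite (link_U L)" by (rule finite_U[OF A1 A2 A3])
  define Bad where "Bad = {I. I \<subseteq> link_U L \<and> \<Inter>I = {} \<and> (\<forall>U\<in>I. U \<noteq> {})}"
  have finBad: "finite Bad"
    by (rule finite_subset[of _ "Pow (link_U L)"]) (use finU in \<open>auto simp: Bad_def\<close>)
  have "\<forall>I\<in>Bad. \<exists>\<delta>>0. \<forall>u. \<exists>U\<in>I. \<forall>u'\<in>U. \<delta> \<le> dist_inf u' u"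
  proof
    fix I assume I: "I \<in> Bad"
    then have "finite I" using finU by (auto simp: Bad_def intro: finite_subset)
    then show "\<exists>\<delta>>0. \<forall>u. \<exists>U\<in>I. \<forall>u'\<in>U. \<delta> \<le> dist_inf u' u"
      using I bad_delta[OF A1 A2 A3, of I] by (auto simp: Bad_def)
  qed
  then obtain \<delta> where \<delta>: "\<And>I. I \<in> Bad \<Longrightarrow> \<delta> I > 0 \<and> (\<forall>u. \<exists>U\<in>I. \<forall>u'\<in>U. \<delta> I \<le> dist_inf u' u)"
    by metis
  define \<epsilon>0 where "\<epsilon>0 = Min (insert 1 (\<delta> ` Bad))"
  have \<epsilon>0pos: "\<epsilon>0 > 0" unfolding \<epsilon>0_def using finBad \<delta> by (subst Min_gr_iff) auto
  have \<epsilon>0le: "\<epsilon>0 \<le> \<delta> I" if "I \<in> Bad" for I unfolding \<epsilon>0_def using finBad that by (intro Min_le) auto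
  show ?thesis
  proof (rule exI[of _ \<epsilon>0], rule conjI[OF \<epsilon>0pos], rule allI, rule impI, rule conjI)
    fix \<epsilon> :: real assume \<epsilon>: "0 < \<epsilon> \<and> \<epsilon> \<le> \<epsilon>0"
    show "\<forall>u. link_Psi L \<gamma> \<epsilon> u \<noteq> {}"
    proof
      fix u
      define I where "I = {U\<in>link_U L. (INF ustar\<in>U. ereal (dist_inf ustar u)) < ereal \<epsilon>}"
      have neI: "\<forall>U\<in>I. U \<noteq> {}" by (auto simp: I_def)
      have "\<Inter>I \<noteq> {}"
      proof
        assume e: "\<Inter>I = {}"
        then have "I \<in> Bad" using neI by (auto simp: Bad_def I_def)
        then obtain U where U: "U \<in> I" "\<forall>u'\<in>U. \<delta> I \<le> dist_inf u' u" and \<epsilon>I: "\<epsilon> \<le> \<delta> I"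
          using \<delta> \<epsilon>0le \<epsilon> by (meson order_trans)
        have "ereal \<epsilon> \<le> (INF ustar\<in>U. ereal (dist_inf ustar u))"
          by (rule INF_greatest) (use U(2) \<epsilon>I in auto)
        then show False using U(1) by (auto simp: I_def)
      qed
      then obtain us where us: "us \<in> \<Inter>I" by blast
      obtain r where r: "prop_level L us \<subseteq> level_set \<gamma> r"
        using assms(3) by (auto simp: indirectly_elicits_def)
      have "r \<in> link_Psi L \<gamma> \<epsilon> u"
        unfolding link_Psi_def I_def[symmetric]
      proof (intro IntI UNIV_I InterI)
        fix X assume "X \<in> link_RU L \<gamma> ` I"
        then obtain U where U: "U \<in> I" "X = link_RU L \<gamma> U" by auto
        then have "us \<in> U" using us by auto
        then show "r \<in> X" using r U(2)
          by (auto simp: link_RU_def link_GammaU_def prop_level_def)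
      qed
      then show "link_Psi L \<gamma> \<epsilon> u \<noteq> {}" by blast
    qed
    show "\<forall>\<psi>. produced_link L \<gamma> \<epsilon> \<psi> \<longrightarrow> (\<exists>\<epsilon>'>0. eps_separated L \<gamma> \<psi> \<epsilon>')"
    proof (intro allI impI)
      fix \<psi> assume pl: "produced_link L \<gamma> \<epsilon> \<psi>"
      show "\<exists>\<epsilon>'>0. eps_separated L \<gamma> \<psi> \<epsilon>'"
      proof (intro exI[of _ \<epsilon>] conjI)
        show "0 < \<epsilon>" using \<epsilon> by simp
        show "eps_separated L \<gamma> \<psi> \<epsilon>"
          unfolding eps_separated_def
        proof (intro allI ballI impI)
          fix u p assume p: "p \<in> prob_simplex" and nr: "\<psi> u \<notin> \<gamma> p"
          show "ereal \<epsilon> \<le> (INF a\<in>prop_L L p. ereal (dist_inf u a))"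
          proof (rule ccontr)
            assume "\<not> ereal \<epsilon> \<le> (INF a\<in>prop_L L p. ereal (dist_inf u a))"
            then have lt: "(INF a\<in>prop_L L p. ereal (dist_inf u a)) < ereal \<epsilon>" by simp
            have sym: "dist_inf u a = dist_inf a u" for a :: "real^'d"
              unfolding dist_inf_def by (simp add: abs_minus_commute)
            have lt2: "(INF a\<in>prop_L L p. ereal (dist_inf a u)) < ereal \<epsilon>" using lt by (simp add: sym)
            have UU: "prop_L L p \<in> link_U L" using p by (auto simp: link_U_def)
            have "\<psi> u \<in> link_Psi L \<gamma> \<epsilon> u" using pl by (simp add: produced_link_def)
            then have "\<psi> u \<in> link_RU L \<gamma> (prop_L L p)"
              unfolding link_Psi_def using UU lt2 by blast
            then have "p \<in> level_set \<gamma> (\<psi> u)" using p by (auto simp: link_RU_def link_GammaU_def)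
            then show False using nr by (simp add: level_set_def)
          qed
        qed
      qed
    qed
  qed
qed

end
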